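(* Let $m\geq 1$, $n\geq 3$, and let $i,j\in V$. If $P$ is a walk of length $2n-1$ in $D^m_n$ from $i$ to $j$, then exactly one of the following occurs: (a) $i=1$ and $j=(k-1)(n-1)+n$ for some $k\in\{1,\ldots,m\}$, and $P=P_{1j}\circ C^s$ for some $s\in\{1,\ldots,m\}$, where $P_{1j}$ is the unique walk of length $n-1$ from $1$ to $j$; (b) $j=1$ and $i=(k-1)(n-1)+2$ for some $k\in\{1,\ldots,m\}$, and $P=C^s\circ P_{i1}$ for some $s\in\{1,\ldots,m\}$, where $P_{i1}$ is the unique walk of length $n-1$ from $i$ to $1$; (c) there exist $k,r\in\{1,\ldots,m\}$ and $\ell\in\{3,\ldots,n\}$ with $i=(k-1)(n-1)+\ell$ and $j=(r-1)(n-1)+(\ell-1)$, and $P=Q_{1j}\circ C^s\circ Q_{i1}$ for some $s\in\{1,\ldots,m\}$, where $Q_{i1}$ is the shortest walk from $i$ to $1$ and $Q_{1j}$ is the shortest walk from $1$ to $j$, and $Q_{1j}\circ Q_{i1}$ is the unique walk of length $n-1$ from $i$ to $j$.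
   Context: For integers $m\geq 1$, $n\geq 3$, the oriented Dutch windmill graph $D^m_n$ is the directed graph with vertex set $V=\{1,2,\ldots,m(n-1)+1\}$ whose directed edges $(a,b)$ are exactly: $(1,(k-1)(n-1)+2)$ for $k\in\{1,\ldots,m\}$; $((k-1)(n-1)+i,(k-1)(n-1)+i+1)$ for $k\in\{1,\ldots,m\}$ and $i\in\{2,\ldots,n-1\}$; and $((k-1)(n-1)+n,1)$ for $k\in\{1,\ldots,m\}$. A walk is a sequence of vertices $\langle v_1,\ldots,v_r\rangle$ in which each $(v_t,v_{t+1})$ is an edge; its length is $r-1$. For $k\in\{1,\ldots,m\}$, $C^k$ is the closed walk $\langle 1,(k-1)(n-1)+2,\ldots,(k-1)(n-1)+n,1\rangle$ of length $n$. If $P=\langle v_1,\ldots,v_r\rangle$ and $Q=\langle w_1,\ldots,w_s\rangle$ are walks with $w_1=v_r$, then $Q\circ P=\langle v_1,\ldots,v_r,w_2,\ldots,w_s\rangle$ (first traverse $P$, then $Q$). *)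

theory Defs
  imports Main
begin

text \<open>Oriented Dutch windmill graph D^m_n on vertices {1..m(n-1)+1}. Walks are
non-empty lists of vertices; the length of a walk is (number of vertices) - 1.\<close>

definition dw_vertices :: "nat \<Rightarrow> nat \<Rightarrow> nat set" where
  "dw_vertices m n = {1 .. m * (n - 1) + 1}"

definition dw_edge :: "nat \<Rightarrow> nat \<Rightarrow> nat \<Rightarrow> nat \<Rightarrow> bool" where
  "dw_edge m n a b \<longleftrightarrow>
     (\<exists>k\<in>{1..m}. a = 1 \<and> b = (k - 1) * (n - 1) + 2)
   \<or> (\<exists>k\<in>{1..m}. \<exists>i\<in>{2..n - 1}. a = (k - 1) * (n - 1) + i \<and> b = (k - 1) * (n - 1) + i + 1)
   \<or> (\<exists>k\<in>{1..m}. a = (k - 1) * (n - 1) + n \<and> b = 1)"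

fun edges_ok :: "(nat \<Rightarrow> nat \<Rightarrow> bool) \<Rightarrow> nat list \<Rightarrow> bool" where
  "edges_ok E (x # y # zs) = (E x y \<and> edges_ok E (y # zs))"
| "edges_ok E _ = True"

definition dw_walk :: "nat \<Rightarrow> nat \<Rightarrow> nat list \<Rightarrow> bool" where
  "dw_walk m n P \<longleftrightarrow> P \<noteq> [] \<and> set P \<subseteq> dw_vertices m n \<and> edges_ok (dw_edge m n) P"

definition walk_len :: "nat list \<Rightarrow> nat" where
  "walk_len P = length P - 1"

definition dw_walk_from_to :: "nat \<Rightarrow> nat \<Rightarrow> nat list \<Rightarrow> nat \<Rightarrow> nat \<Rightarrow> bool" where
  "dw_walk_from_to m n P a b \<longleftrightarrow> dw_walk m n P \<and> hd P = a \<and> last P = b"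

definition dw_shortest :: "nat \<Rightarrow> nat \<Rightarrow> nat list \<Rightarrow> nat \<Rightarrow> nat \<Rightarrow> bool" where
  "dw_shortest m n P a b \<longleftrightarrow> dw_walk_from_to m n P a b \<and>
     (\<forall>Q. dw_walk_from_to m n Q a b \<longrightarrow> walk_len P \<le> walk_len Q)"

text \<open>Composition Q \<circ> P: first traverse P, then Q (requires hd Q = last P).\<close>
definition wcomp :: "nat list \<Rightarrow> nat list \<Rightarrow> nat list" (infixr "\<circ>\<^sub>w" 65) where
  "Q \<circ>\<^sub>w P = P @ tl Q"

definition cyc :: "nat \<Rightarrow> nat \<Rightarrow> nat list" where
  "cyc n k = 1 # [(k - 1) * (n - 1) + 2 ..< (k - 1) * (n - 1) + n + 1] @ [1]"

end

theory Submission
  imports Defs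
begin

lemma rep_inj:
  fixes n k k' t t' :: nat
  assumes "n \<ge> 3" "k \<ge> 1" "k' \<ge> 1" "t \<in> {2..n}" "t' \<in> {2..n}"
    and eq: "(k-1)*(n-1)+t = (k'-1)*(n-1)+t'"
  shows "k = k' \<and> t = t'"
proof -
  define N where "N = n - 1"
  have N: "N \<ge> 2" "t - 2 < N" "t' - 2 < N" using assms by (auto simp: N_def)
  have e2: "(k-1)*N + (t-2) = (k'-1)*N + (t'-2)" using eq assms unfolding N_def by auto
  have "((k-1)*N + (t-2)) div N = k - 1" using N by simp
  moreover have "((k'-1)*N + (t'-2)) div N = k' - 1" using N by simp
  moreover have "((k-1)*N + (t-2)) mod N = t - 2" using N by simp
  moreover have "((k'-1)*N + (t'-2)) mod N = t' - 2" using N by simp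
  ultimately show ?thesis using e2 assms by auto
qed

lemma edge_blade:
  assumes n3: "n \<ge> 3" and k: "k \<in> {1..m}" and t: "t \<in> {2..n}"
  shows "dw_edge m n ((k-1)*(n-1)+t) b \<longleftrightarrow> (if t < n then b = (k-1)*(n-1)+t+1 else b = 1)"
proof
  assume e: "dw_edge m n ((k-1)*(n-1)+t) b"
  show "(if t < n then b = (k-1)*(n-1)+t+1 else b = 1)"
    using e unfolding dw_edge_def
  proof (elim disjE bexE conjE)
    fix k' assume "(k-1)*(n-1)+t = 1" then show ?thesis using t by auto
  next
    fix k' i assume h: "k' \<in> {1..m}" "i \<in> {2..n-1}" "(k-1)*(n-1)+t = (k'-1)*(n-1)+i"
      "b = (k'-1)*(n-1)+i+1"
    then have "k = k' \<and> t = i" using rep_inj[of n k k' t i] n3 k t by auto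
    then show ?thesis using h by auto
  next
    fix k' assume h: "k' \<in> {1..m}" "(k-1)*(n-1)+t = (k'-1)*(n-1)+n" "b = 1"
    then have "k = k' \<and> t = n" using rep_inj[of n k k' t n] n3 k t by auto
    then show ?thesis using h by auto
  qed
next
  assume h: "(if t < n then b = (k-1)*(n-1)+t+1 else b = 1)"
  show "dw_edge m n ((k-1)*(n-1)+t) b"
  proof (cases "t < n")
    case True
    have "t \<in> {2..n-1}" using True t by auto
    have tt: "t \<in> {2..n-1}" using True t by auto
    have "\<exists>k'\<in>{1..m}. \<exists>i\<in>{2..n - 1}. (k-1)*(n-1)+t = (k'-1)*(n-1)+i \<and> b = (k'-1)*(n-1)+i+1"
      apply (rule bexI[where x=k]) apply (rule bexI[where x=t])
      using h k True tt by auto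
    then show ?thesis unfolding dw_edge_def by blast
  next
    case False
    then have "t = n" using t by auto
    then show ?thesis using h k False unfolding dw_edge_def by auto
  qed
qed

lemma edge_hub:
  assumes n3: "n \<ge> 3"
  shows "dw_edge m n 1 b \<longleftrightarrow> (\<exists>k\<in>{1..m}. b = (k-1)*(n-1)+2)"
  using n3 unfolding dw_edge_def by auto

lemma vert_blade:
  assumes n3: "n \<ge> 3" and k: "k \<in> {1..m}" and t: "t \<in> {2..n}"
  shows "(k-1)*(n-1)+t \<in> dw_vertices m n"
proof -
  have a: "(k-1)*(n-1) \<le> (m-1)*(n-1)" using k by (intro mult_le_mono1) auto
  moreover have "(m-1)*(n-1) + (n-1) = m*(n-1)" using k
    by (metis Suc_diff_1 add.commute le_less_trans less_numeral_extra(1) linorder_not_le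
        mult_Suc atLeastAtMost_iff)
  moreover have "t \<le> n" using t by auto
  ultimately have "(k-1)*(n-1)+t \<le> m*(n-1)+1" using n3 by linarith
  moreover have "(k-1)*(n-1)+t \<ge> 1" using t by auto
  ultimately show ?thesis unfolding dw_vertices_def by auto
qed

lemma vert_class:
  assumes n3: "n \<ge> 3" and v: "v \<in> dw_vertices m n"
  shows "v = 1 \<or> (\<exists>k\<in>{1..m}. \<exists>t\<in>{2..n}. v = (k-1)*(n-1)+t)"
proof (cases "v = 1")
  case False
  define N where "N = n - 1"
  have N: "N \<ge> 2" using n3 by (simp add: N_def)
  have v2: "v \<ge> 2" "v \<le> m*N + 1" using v False unfolding dw_vertices_def N_def by auto
  define q where "q = (v-2) div N"
  define r where "r = (v-2) mod N"
  have vr: "v - 2 = q*N + r" by (simp add: q_def r_def)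
  have rN: "r < N" using N by (simp add: r_def)
  have "q < m"
  proof (rule ccontr)
    assume "\<not> q < m"
    then have "m*N \<le> q*N" by (simp add: mult_le_mono1)
    then show False using vr v2 by linarith
  qed
  then have "Suc q \<in> {1..m}" by auto
  moreover have "r + 2 \<in> {2..n}" using rN N by (auto simp: N_def)
  moreover have "v = (Suc q - 1)*(n-1) + (r+2)" using vr v2 by (simp add: N_def)
  ultimately show ?thesis by blast
qed simp

lemma edges_ok_Cons: "edges_ok E (x # xs) \<longleftrightarrow> (xs = [] \<or> (E x (hd xs) \<and> edges_ok E xs))"
  by (cases xs) auto

lemma edges_ok_append:
  "edges_ok E (xs @ ys) \<longleftrightarrow> edges_ok E xs \<and> edges_ok E ys \<and> (xs \<noteq> [] \<and> ys \<noteq> [] \<longrightarrow> E (last xs) (hd ys))"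
proof (induction xs)
  case Nil then show ?case by simp
next
  case (Cons x xs)
  then show ?case by (cases xs; cases ys) (auto simp: edges_ok_Cons)
qed

lemma edges_ok_take: "edges_ok E W \<Longrightarrow> edges_ok E (take k W)"
  using edges_ok_append[of E "take k W" "drop k W"] by simp
lemma edges_ok_drop: "edges_ok E W \<Longrightarrow> edges_ok E (drop k W)"
  using edges_ok_append[of E "take k W" "drop k W"] by simp

lemma edges_ok_comp:
  assumes "edges_ok E A" "edges_ok E B" "A \<noteq> []" "B \<noteq> []" "last A = hd B"
  shows "edges_ok E (A @ tl B)"
proof -
  obtain b B' where B: "B = b # B'" using assms by (cases B) auto
  show ?thesis using assms B by (auto simp: edges_ok_append edges_ok_Cons)
qed

lemma split_walk: "a < length W \<Longrightarrow> W = take (Suc a) W @ tl (drop a W)"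
  by (metis append_take_drop_id drop_Suc tl_drop)

lemma seg_blade:
  assumes n3: "n \<ge> 3" and k: "k \<in> {1..m}"
  shows "t \<in> {2..n} \<Longrightarrow> L + t \<le> n \<Longrightarrow> edges_ok (dw_edge m n) W \<Longrightarrow> hd W = (k-1)*(n-1)+t
    \<Longrightarrow> length W = Suc L \<Longrightarrow> W = [(k-1)*(n-1)+t ..< (k-1)*(n-1)+t+Suc L]"
proof (induction L arbitrary: t W)
  case 0 then show ?case by (cases W) auto
next
  case (Suc L)
  obtain x w W' where W: "W = x # w # W'" using Suc.prems(5)
    by (metis Suc_length_conv)
  have x: "x = (k-1)*(n-1)+t" using Suc.prems W by simp
  have e: "dw_edge m n ((k-1)*(n-1)+t) w" using Suc.prems(3) W x by simp
  have "t < n" using Suc.prems by simp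
  hence w: "w = (k-1)*(n-1)+(t+1)" using edge_blade[OF n3 k Suc.prems(1)] e by simp
  have "w # W' = [(k-1)*(n-1)+(t+1) ..< (k-1)*(n-1)+(t+1)+Suc L]"
    apply (rule Suc.IH) using Suc.prems W w by auto
  then show ?case using W x by (simp add: upt_conv_Cons)
qed

lemma last_hub_gen: "0 < L \<Longrightarrow> last (x # [b..<b+L]) = b + L - 1"
  by simp

lemma last_hub: "1 \<le> L \<Longrightarrow> last ((1::nat) # [(r-1)*(n-1)+2 ..< (r-1)*(n-1)+2+L]) = (r-1)*(n-1)+(L+1)"
  using last_hub_gen[of L 1 "(r-1)*(n-1)+2"] by simp

lemma last_take_Suc: "a < length X \<Longrightarrow> last (take (Suc a) X) = X ! a"
  by (simp add: take_Suc_conv_app_nth)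

lemma wft_iff: "dw_walk_from_to m n W a b \<longleftrightarrow> W \<noteq> [] \<and> set W \<subseteq> dw_vertices m n \<and> edges_ok (dw_edge m n) W \<and> hd W = a \<and> last W = b"
  by (auto simp: dw_walk_from_to_def dw_walk_def)

lemma seg_blade_end:
  assumes n3: "n \<ge> 3" and k: "k \<in> {1..m}" and t: "t \<in> {2..n}"
    and W: "edges_ok (dw_edge m n) W" "hd W = (k-1)*(n-1)+t" "length W = n - t + 2"
  shows "W = [(k-1)*(n-1)+t ..< (k-1)*(n-1)+n+1] @ [1]"
proof -
  have ne: "W \<noteq> []" using W by auto
  have sp: "W = butlast W @ [last W]" using ne by simp
  have ea: "edges_ok (dw_edge m n) (butlast W @ [last W])" using W(1) ne by simp
  have bne: "butlast W \<noteq> []" using W t by (cases W) auto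
  have e1: "edges_ok (dw_edge m n) (butlast W)" and e2: "dw_edge m n (last (butlast W)) (last W)"
    using ea bne unfolding edges_ok_append by auto
  have h1: "hd (butlast W) = (k-1)*(n-1)+t" using W t by (cases W) auto
  have l1: "length (butlast W) = Suc (n - t)" using W t by auto
  have bw: "butlast W = [(k-1)*(n-1)+t ..< (k-1)*(n-1)+t+Suc (n-t)]"
    by (rule seg_blade[OF n3 k t _ e1 h1 l1]) (use t in auto)
  have bw': "butlast W = [(k-1)*(n-1)+t ..< (k-1)*(n-1)+n+1]" using bw t by simp
  note e2
  moreover have "last (butlast W) = (k-1)*(n-1)+n" using bw' t by simp
  ultimately have "last W = 1" using edge_blade[OF n3 k, of n "last W"] n3 by simp
  then show ?thesis using sp bw' by simp
qed

lemma seg_hub: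
  assumes n3: "n \<ge> 3" and L: "1 \<le> L" "L \<le> n - 1"
    and W: "edges_ok (dw_edge m n) W" "hd W = 1" "length W = Suc L"
  shows "\<exists>r\<in>{1..m}. W = 1 # [(r-1)*(n-1)+2 ..< (r-1)*(n-1)+2+L]"
proof -
  obtain x W1 where W1: "W = x # W1" using W(3) by (cases W) auto
  then obtain w W' where "W1 = w # W'" using W(3) L by (cases W1) auto
  with W1 have WW: "W = x # w # W'" by simp
  have x: "x = 1" using W WW by simp
  have "dw_edge m n 1 w" using W(1) WW x by simp
  then obtain r where r: "r \<in> {1..m}" "w = (r-1)*(n-1)+2" using edge_hub[OF n3] by blast
  have "w # W' = [(r-1)*(n-1)+2 ..< (r-1)*(n-1)+2+Suc (L-1)]"
    by (rule seg_blade[OF n3 r(1)]) (use n3 L W WW r in auto)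
  then have "w # W' = [(r-1)*(n-1)+2 ..< (r-1)*(n-1)+2+L]" using L by simp
  then show ?thesis using WW x r by blast
qed

lemma seg_cycle:
  assumes n3: "n \<ge> 3"
    and W: "edges_ok (dw_edge m n) W" "hd W = 1" "length W = n + 1"
  shows "\<exists>r\<in>{1..m}. W = cyc n r"
proof -
  obtain x W1 where W1: "W = x # W1" using W(3) by (cases W) auto
  then obtain w W' where "W1 = w # W'" using W(3) n3 by (cases W1) auto
  with W1 have WW: "W = x # w # W'" by simp
  have x: "x = 1" using W WW by simp
  have "dw_edge m n 1 w" using W(1) WW x by simp
  then obtain r where r: "r \<in> {1..m}" "w = (r-1)*(n-1)+2" using edge_hub[OF n3] by blast
  have "w # W' = [(r-1)*(n-1)+2 ..< (r-1)*(n-1)+n+1] @ [1]"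
    by (rule seg_blade_end[OF n3 r(1)]) (use n3 W WW r in auto)
  then show ?thesis using WW x r unfolding cyc_def by auto
qed

lemma blade_to_hub_len:
  assumes n3: "n \<ge> 3" and k: "k \<in> {1..m}" and t: "t \<in> {2..n}"
    and W: "edges_ok (dw_edge m n) W" "W \<noteq> []" "hd W = (k-1)*(n-1)+t" "last W = 1"
  shows "length W \<ge> n - t + 2"
proof (rule ccontr)
  assume nt: "\<not> ?thesis"
  define L where "L = length W - 1"
  have L: "length W = Suc L" "L + t \<le> n" using W(2) t nt by (auto simp: L_def)
  have "W = [(k-1)*(n-1)+t ..< (k-1)*(n-1)+t+Suc L]" by (rule seg_blade[OF n3 k t L(2) W(1) W(3) L(1)])
  then have "last W = (k-1)*(n-1)+t+L" by simp
  then show False using W(4) t by simp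
qed

lemma hub_to_blade_len:
  assumes n3: "n \<ge> 3" and r: "r \<in> {1..m}" and t: "t \<in> {2..n}"
    and W: "edges_ok (dw_edge m n) W" "W \<noteq> []" "hd W = 1" "last W = (r-1)*(n-1)+t"
  shows "length W \<ge> t"
proof (rule ccontr)
  assume nt: "\<not> ?thesis"
  define L where "L = length W - 1"
  have L: "length W = Suc L" "Suc L < t" using W(2) nt by (auto simp: L_def)
  show False
  proof (cases "L = 0")
    case True
    then have "W = [1]" using L W by (cases W) auto
    then show False using W(4) t by simp
  next
    case False
    obtain r' where r': "r' \<in> {1..m}" "W = 1 # [(r'-1)*(n-1)+2 ..< (r'-1)*(n-1)+2+L]"
    proof -
      have "1 \<le> L" "L \<le> n - 1" using False L t by auto
      from seg_hub[OF n3 this W(1) W(3) L(1)] show ?thesis using that by blast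
    qed
    then have "last W = (r'-1)*(n-1)+(L+1)" using False by (simp add: last_upt)
    then have "r' = r \<and> L + 1 = t" using rep_inj[of n r' r "L+1" t] W(4) r r' t L n3 False by auto
    then show False using L by simp
  qed
qed

theorem lemma2p3:
  fixes m n i j :: nat and P :: "nat list"
  assumes "m \<ge> 1" and "n \<ge> 3"
    and "i \<in> dw_vertices m n" and "j \<in> dw_vertices m n"
    and "dw_walk_from_to m n P i j" and "walk_len P = 2 * n - 1"
  defines "A \<equiv> i = 1 \<and> (\<exists>k\<in>{1..m}. j = (k - 1) * (n - 1) + n) \<and>
      (\<exists>W. dw_walk_from_to m n W 1 j \<and> walk_len W = n - 1 \<and>
           (\<forall>W'. dw_walk_from_to m n W' 1 j \<and> walk_len W' = n - 1 \<longrightarrow> W' = W) \<and>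
           (\<exists>s\<in>{1..m}. P = W \<circ>\<^sub>w cyc n s))"
    and "B \<equiv> j = 1 \<and> (\<exists>k\<in>{1..m}. i = (k - 1) * (n - 1) + 2) \<and>
      (\<exists>W. dw_walk_from_to m n W i 1 \<and> walk_len W = n - 1 \<and>
           (\<forall>W'. dw_walk_from_to m n W' i 1 \<and> walk_len W' = n - 1 \<longrightarrow> W' = W) \<and>
           (\<exists>s\<in>{1..m}. P = cyc n s \<circ>\<^sub>w W))"
    and "C \<equiv> (\<exists>k\<in>{1..m}. \<exists>r\<in>{1..m}. \<exists>l\<in>{3..n}.
         i = (k - 1) * (n - 1) + l \<and> j = (r - 1) * (n - 1) + (l - 1)) \<and>
      (\<exists>Qi1 Q1j. dw_shortest m n Qi1 i 1 \<and>
           (\<forall>Q. dw_shortest m n Q i 1 \<longrightarrow> Q = Qi1) \<and>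
           dw_shortest m n Q1j 1 j \<and>
           (\<forall>Q. dw_shortest m n Q 1 j \<longrightarrow> Q = Q1j) \<and>
           dw_walk_from_to m n (Q1j \<circ>\<^sub>w Qi1) i j \<and> walk_len (Q1j \<circ>\<^sub>w Qi1) = n - 1 \<and>
           (\<forall>W'. dw_walk_from_to m n W' i j \<and> walk_len W' = n - 1 \<longrightarrow> W' = Q1j \<circ>\<^sub>w Qi1) \<and>
           (\<exists>s\<in>{1..m}. P = Q1j \<circ>\<^sub>w cyc n s \<circ>\<^sub>w Qi1))"
  shows "(A \<and> \<not> B \<and> \<not> C) \<or> (\<not> A \<and> B \<and> \<not> C) \<or> (\<not> A \<and> \<not> B \<and> C)"
proof -
  have n3: "n \<ge> 3" using assms(2) .
  have Pne: "P \<noteq> []" and PV: "set P \<subseteq> dw_vertices m n" and PE: "edges_ok (dw_edge m n) P"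
    and Ph: "hd P = i" and Pl: "last P = j"
    using assms(5) by (auto simp: wft_iff)
  have Plen: "length P = 2*n" using assms(6) Pne n3 by (cases P) (auto simp: walk_len_def)
  from vert_class[OF n3 assms(3)] consider (hub) "i = 1"
    | (bl) k t where "k \<in> {1..m}" "t \<in> {2..n}" "i = (k-1)*(n-1)+t" by blast
  then show ?thesis
  proof cases
    case hub
    define c where "c = take (Suc n) P"
    define W where "W = drop n P"
    have sp: "P = c @ tl W" unfolding c_def W_def by (rule split_walk) (use Plen n3 in simp)
    have cE: "edges_ok (dw_edge m n) c" unfolding c_def by (rule edges_ok_take[OF PE])
    have ch: "hd c = 1" using Pne hub Ph n3 unfolding c_def by simp
    have cl: "length c = n+1" using Plen n3 unfolding c_def by simp
    obtain s where s: "s \<in> {1..m}" "c = cyc n s" using seg_cycle[OF n3 cE ch cl] by blast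
    have Pn: "P ! n = 1"
    proof -
      have "last c = P ! n" unfolding c_def by (rule last_take_Suc) (use Plen n3 in simp)
      moreover have "last c = 1" using s by (simp add: cyc_def)
      ultimately show ?thesis by simp
    qed
    have WE: "edges_ok (dw_edge m n) W" unfolding W_def by (rule edges_ok_drop[OF PE])
    have Wh: "hd W = 1" unfolding W_def using Pn Plen n3 by (simp add: hd_drop_conv_nth)
    have Wl: "length W = Suc (n-1)" unfolding W_def using Plen n3 by simp
    have n1: "1 \<le> n - 1" "n - 1 \<le> n - 1" using n3 by auto
    obtain r where r: "r \<in> {1..m}" "W = 1 # [(r-1)*(n-1)+2 ..< (r-1)*(n-1)+2+(n-1)]"
      using seg_hub[OF n3 n1 WE Wh Wl] by blast
    have Wlast: "last W = (r-1)*(n-1)+n" using r n3 by simp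
    have jW: "j = last W" using Pl Plen n3 unfolding W_def by simp
    have WV: "set W \<subseteq> dw_vertices m n" unfolding W_def using PV set_drop_subset by (metis order_trans)
    have j3: "j \<noteq> 1" using jW Wlast n3 by simp
    have AA: A
      unfolding A_def
    proof (intro conjI)
      show "i = 1" by (rule hub)
      show "\<exists>k\<in>{1..m}. j = (k-1)*(n-1)+n" using jW Wlast r by blast
      show "\<exists>W. dw_walk_from_to m n W 1 j \<and> walk_len W = n - 1 \<and>
           (\<forall>W'. dw_walk_from_to m n W' 1 j \<and> walk_len W' = n - 1 \<longrightarrow> W' = W) \<and>
           (\<exists>s\<in>{1..m}. P = W \<circ>\<^sub>w cyc n s)"
      proof (intro exI[of _ W] conjI)
        show "dw_walk_from_to m n W 1 j" using WE Wh WV jW Wl by (auto simp: wft_iff)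
        show "walk_len W = n-1" using Wl by (simp add: walk_len_def)
        show "\<forall>W'. dw_walk_from_to m n W' 1 j \<and> walk_len W' = n - 1 \<longrightarrow> W' = W"
        proof (intro allI impI)
          fix W' assume h: "dw_walk_from_to m n W' 1 j \<and> walk_len W' = n - 1"
          then have W'E: "edges_ok (dw_edge m n) W'" and W'h: "hd W' = 1" and W'l: "last W' = j"
            and W'ne: "W' \<noteq> []" by (auto simp: wft_iff)
          have W'len: "length W' = Suc (n-1)" using h W'ne n3 by (cases W') (auto simp: walk_len_def)
          obtain r' where r': "r' \<in> {1..m}" "W' = 1 # [(r'-1)*(n-1)+2 ..< (r'-1)*(n-1)+2+(n-1)]"
            using seg_hub[OF n3 n1 W'E W'h W'len] by blast
          have "last W' = (r'-1)*(n-1)+n" using r' n3 by simp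
          then have "r' = r" using rep_inj[of n r' r n n] W'l jW Wlast r r' n3 by auto
          then show "W' = W" using r r' by simp
        qed
        show "\<exists>s\<in>{1..m}. P = W \<circ>\<^sub>w cyc n s" using s sp by (auto simp: wcomp_def)
      qed
    qed
    have nB: "\<not> B" unfolding B_def using j3 by blast
    have "\<not> (\<exists>k\<in>{1..m}. \<exists>r\<in>{1..m}. \<exists>l\<in>{3..n}.
         i = (k - 1) * (n - 1) + l \<and> j = (r - 1) * (n - 1) + (l - 1))" using hub by auto
    then have nC: "\<not> C" unfolding C_def by blast
    show ?thesis using AA nB nC by blast
  next
    case bl
    note k = bl(1) and t = bl(2) and ik = bl(3)
    have i1: "i \<noteq> 1" using ik t by simp
    show ?thesis
    proof (cases "t = 2")
      case True
      define W where "W = take (Suc (n-1)) P"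
      define D where "D = drop (n-1) P"
      have sp: "P = W @ tl D" unfolding W_def D_def by (rule split_walk) (use Plen n3 in simp)
      have WE: "edges_ok (dw_edge m n) W" unfolding W_def by (rule edges_ok_take[OF PE])
      have Wh: "hd W = (k-1)*(n-1)+t" using Pne ik Ph n3 unfolding W_def by simp
      have Wl: "length W = n - t + 2" using Plen True n3 unfolding W_def by simp
      have Wx: "W = [(k-1)*(n-1)+t ..< (k-1)*(n-1)+n+1] @ [1]" by (rule seg_blade_end[OF n3 k t WE Wh Wl])
      have Pn: "P ! (n-1) = 1"
      proof -
        have "last W = P ! (n-1)" unfolding W_def by (rule last_take_Suc) (use Plen n3 in simp)
        moreover have "last W = 1" using Wx by simp
        ultimately show ?thesis by simp
      qed
      have DE: "edges_ok (dw_edge m n) D" unfolding D_def by (rule edges_ok_drop[OF PE])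
      have Dh: "hd D = 1" unfolding D_def using Pn Plen n3 by (simp add: hd_drop_conv_nth)
      have Dl: "length D = n + 1" unfolding D_def using Plen n3 by simp
      obtain s where s: "s \<in> {1..m}" "D = cyc n s" using seg_cycle[OF n3 DE Dh Dl] by blast
      have "last P = last D" unfolding D_def using Plen n3 by simp
      then have j1: "j = 1" using Pl s by (simp add: cyc_def)
      have WV: "set W \<subseteq> dw_vertices m n" unfolding W_def using PV set_take_subset by (metis order_trans)
      have BB: B
        unfolding B_def
      proof (intro conjI)
        show "j = 1" by (rule j1)
        show "\<exists>k\<in>{1..m}. i = (k-1)*(n-1)+2" using ik k True by blast
        show "\<exists>W. dw_walk_from_to m n W i 1 \<and> walk_len W = n - 1 \<and>
           (\<forall>W'. dw_walk_from_to m n W' i 1 \<and> walk_len W' = n - 1 \<longrightarrow> W' = W) \<and>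
           (\<exists>s\<in>{1..m}. P = cyc n s \<circ>\<^sub>w W)"
        proof (intro exI[of _ W] conjI)
          show "dw_walk_from_to m n W i 1" using WE Wh WV Wx ik by (auto simp: wft_iff)
          show "walk_len W = n-1" using Wl True n3 by (simp add: walk_len_def)
          show "\<forall>W'. dw_walk_from_to m n W' i 1 \<and> walk_len W' = n - 1 \<longrightarrow> W' = W"
          proof (intro allI impI)
            fix W' assume h: "dw_walk_from_to m n W' i 1 \<and> walk_len W' = n - 1"
            then have W'E: "edges_ok (dw_edge m n) W'" and W'h: "hd W' = (k-1)*(n-1)+t"
              and W'ne: "W' \<noteq> []" using ik by (auto simp: wft_iff)
            have W'len: "length W' = n - t + 2" using h W'ne n3 True by (cases W') (auto simp: walk_len_def)
            show "W' = W" using seg_blade_end[OF n3 k t W'E W'h W'len] Wx by simp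
          qed
          show "\<exists>s\<in>{1..m}. P = cyc n s \<circ>\<^sub>w W" using s sp by (auto simp: wcomp_def)
        qed
      qed
      have nA: "\<not> A" unfolding A_def using i1 by blast
      have "\<not> (\<exists>k\<in>{1..m}. \<exists>r\<in>{1..m}. \<exists>l\<in>{3..n}.
         i = (k - 1) * (n - 1) + l \<and> j = (r - 1) * (n - 1) + (l - 1))" using j1 by auto
      then have nC: "\<not> C" unfolding C_def by blast
      show ?thesis using BB nA nC by blast
    next
      case False
      then have t3: "t \<ge> 3" "t \<le> n" using t by auto
      define a where "a = n - t + 1"
      have aP: "a < length P" using Plen t3 by (simp add: a_def)
      define Qi where "Qi = take (Suc a) P"
      define R where "R = drop a P"
      have sp1: "P = Qi @ tl R" unfolding Qi_def R_def by (rule split_walk[OF aP])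
      have QiE: "edges_ok (dw_edge m n) Qi" unfolding Qi_def by (rule edges_ok_take[OF PE])
      have Qih: "hd Qi = (k-1)*(n-1)+t" using Pne ik Ph n3 unfolding Qi_def by simp
      have Qil: "length Qi = n - t + 2" using aP t3 unfolding Qi_def a_def by simp
      have Qix: "Qi = [(k-1)*(n-1)+t ..< (k-1)*(n-1)+n+1] @ [1]" by (rule seg_blade_end[OF n3 k t QiE Qih Qil])
      have Pa: "P ! a = 1"
      proof -
        have "last Qi = P ! a" unfolding Qi_def by (rule last_take_Suc[OF aP])
        moreover have "last Qi = 1" using Qix by simp
        ultimately show ?thesis by simp
      qed
      have RE: "edges_ok (dw_edge m n) R" unfolding R_def by (rule edges_ok_drop[OF PE])
      have Rh: "hd R = 1" unfolding R_def using Pa aP by (simp add: hd_drop_conv_nth)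
      have Rl: "length R = n + t - 1" unfolding R_def using Plen t3 by (simp add: a_def)
      have nR: "n < length R" using Rl t3 by simp
      define cR where "cR = take (Suc n) R"
      define Q1j where "Q1j = drop n R"
      have sp2: "R = cR @ tl Q1j" unfolding cR_def Q1j_def by (rule split_walk[OF nR])
      have cE: "edges_ok (dw_edge m n) cR" unfolding cR_def by (rule edges_ok_take[OF RE])
      have ch: "hd cR = 1" using Rh nR unfolding cR_def by simp
      have cl: "length cR = n+1" using nR unfolding cR_def by simp
      obtain s where s: "s \<in> {1..m}" "cR = cyc n s" using seg_cycle[OF n3 cE ch cl] by blast
      have Rn: "R ! n = 1"
      proof -
        have "last cR = R ! n" unfolding cR_def by (rule last_take_Suc[OF nR])
        moreover have "last cR = 1" using s by (simp add: cyc_def)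
        ultimately show ?thesis by simp
      qed
      have QE: "edges_ok (dw_edge m n) Q1j" unfolding Q1j_def by (rule edges_ok_drop[OF RE])
      have Qh: "hd Q1j = 1" unfolding Q1j_def using Rn nR by (simp add: hd_drop_conv_nth)
      have Ql: "length Q1j = Suc (t-2)" unfolding Q1j_def using Rl t3 by simp
      have tt: "1 \<le> t - 2" "t - 2 \<le> n - 1" using t3 by auto
      obtain r where r: "r \<in> {1..m}" "Q1j = 1 # [(r-1)*(n-1)+2 ..< (r-1)*(n-1)+2+(t-2)]"
        using seg_hub[OF n3 tt QE Qh Ql] by blast
      have Qlast: "last Q1j = (r-1)*(n-1)+(t-1)" using r t3 last_hub[of "t-2" r n] by simp
      have jQ: "j = last Q1j" using Pl aP nR unfolding R_def Q1j_def by simp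
      have j1: "j \<noteq> 1" using jQ Qlast t3 by simp
      have t1: "t - 1 \<in> {2..n}" using t3 by auto
      have QiV: "set Qi \<subseteq> dw_vertices m n" unfolding Qi_def using PV set_take_subset by (metis order_trans)
      have QV: "set Q1j \<subseteq> dw_vertices m n" unfolding Q1j_def R_def using PV set_drop_subset by (metis order_trans)
      have Qiw: "dw_walk_from_to m n Qi i 1" using QiE Qih QiV Qix ik by (auto simp: wft_iff)
      have Qw: "dw_walk_from_to m n Q1j 1 j" using QE Qh QV jQ Ql by (auto simp: wft_iff)
      have CC: C
        unfolding C_def
      proof (intro conjI)
        show "\<exists>k\<in>{1..m}. \<exists>r\<in>{1..m}. \<exists>l\<in>{3..n}. i = (k - 1) * (n - 1) + l \<and> j = (r - 1) * (n - 1) + (l - 1)"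
          apply (rule bexI[where x=k]) apply (rule bexI[where x=r]) apply (rule bexI[where x=t])
          using k r t3 ik jQ Qlast by auto
        show "\<exists>Qi1 Q1j. dw_shortest m n Qi1 i 1 \<and>
           (\<forall>Q. dw_shortest m n Q i 1 \<longrightarrow> Q = Qi1) \<and>
           dw_shortest m n Q1j 1 j \<and>
           (\<forall>Q. dw_shortest m n Q 1 j \<longrightarrow> Q = Q1j) \<and>
           dw_walk_from_to m n (Q1j \<circ>\<^sub>w Qi1) i j \<and> walk_len (Q1j \<circ>\<^sub>w Qi1) = n - 1 \<and>
           (\<forall>W'. dw_walk_from_to m n W' i j \<and> walk_len W' = n - 1 \<longrightarrow> W' = Q1j \<circ>\<^sub>w Qi1) \<and>
           (\<exists>s\<in>{1..m}. P = Q1j \<circ>\<^sub>w cyc n s \<circ>\<^sub>w Qi1)"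
        proof (rule exI[of _ Qi], rule exI[of _ Q1j], intro conjI)
          have lbi: "length Q \<ge> n - t + 2" if "dw_walk_from_to m n Q i 1" for Q
            using blade_to_hub_len[OF n3 k t, of Q] that ik by (auto simp: wft_iff)
          show shi: "dw_shortest m n Qi i 1"
            unfolding dw_shortest_def
          proof (intro conjI allI impI)
            show "dw_walk_from_to m n Qi i 1" by (rule Qiw)
            fix Q assume "dw_walk_from_to m n Q i 1"
            from lbi[OF this] Qil show "walk_len Qi \<le> walk_len Q" by (simp add: walk_len_def)
          qed
          show "\<forall>Q. dw_shortest m n Q i 1 \<longrightarrow> Q = Qi"
          proof (intro allI impI)
            fix Q assume h: "dw_shortest m n Q i 1"
            then have Qw': "dw_walk_from_to m n Q i 1" and "walk_len Q \<le> walk_len Qi"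
              using Qiw unfolding dw_shortest_def by auto
            then have "length Q = n - t + 2" using lbi[OF Qw'] Qil t3 by (auto simp: walk_len_def)
            moreover have "edges_ok (dw_edge m n) Q" "hd Q = (k-1)*(n-1)+t" using Qw' ik by (auto simp: wft_iff)
            ultimately show "Q = Qi" using seg_blade_end[OF n3 k t] Qix by simp
          qed
          have lbj: "length Q \<ge> t - 1" if "dw_walk_from_to m n Q 1 j" for Q
            using hub_to_blade_len[OF n3 r(1) t1, of Q] that jQ Qlast by (auto simp: wft_iff)
          have shj: "dw_shortest m n Q1j 1 j"
            unfolding dw_shortest_def
          proof (intro conjI allI impI)
            show "dw_walk_from_to m n Q1j 1 j" by (rule Qw)
            fix Q assume "dw_walk_from_to m n Q 1 j"
            from lbj[OF this] Ql show "walk_len Q1j \<le> walk_len Q" by (simp add: walk_len_def)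
          qed
          show "dw_shortest m n Q1j 1 j" by (rule shj)
          show "\<forall>Q. dw_shortest m n Q 1 j \<longrightarrow> Q = Q1j"
          proof (intro allI impI)
            fix Q assume h: "dw_shortest m n Q 1 j"
            then have Qw': "dw_walk_from_to m n Q 1 j" and "walk_len Q \<le> walk_len Q1j"
              using Qw unfolding dw_shortest_def by auto
            then have QL: "length Q = Suc (t-2)" using lbj[OF Qw'] Ql t3 by (auto simp: walk_len_def)
            have QE': "edges_ok (dw_edge m n) Q" "hd Q = 1" "last Q = j" using Qw' by (auto simp: wft_iff)
            obtain r' where r': "r' \<in> {1..m}" "Q = 1 # [(r'-1)*(n-1)+2 ..< (r'-1)*(n-1)+2+(t-2)]"
              using seg_hub[OF n3 tt QE'(1) QE'(2) QL] by blast
            have "last Q = (r'-1)*(n-1)+(t-1)" using r' t3 last_hub[of "t-2" r' n] by simp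
            then have "r' = r" using rep_inj[of n r' r "t-1" "t-1"] QE'(3) jQ Qlast r r' n3 t1 by auto
            then show "Q = Q1j" using r r' by simp
          qed
          have tlQ: "tl Q1j \<noteq> []" using Ql t3 by (cases Q1j) auto
          show "dw_walk_from_to m n (Q1j \<circ>\<^sub>w Qi) i j"
          proof -
            have "edges_ok (dw_edge m n) (Qi @ tl Q1j)"
              by (rule edges_ok_comp[OF QiE QE]) (use Qix Qh r in auto)
            moreover have "set (tl Q1j) \<subseteq> set Q1j" by (cases Q1j) auto
            then have "set (Qi @ tl Q1j) \<subseteq> dw_vertices m n" using QiV QV by auto
            moreover have "hd (Qi @ tl Q1j) = i" using Qih ik Qil by (cases Qi) auto
            moreover have "last (Qi @ tl Q1j) = j" using tlQ jQ by (simp add: last_tl)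
            ultimately show ?thesis using Qil tlQ by (auto simp: wft_iff wcomp_def)
          qed
          show "walk_len (Q1j \<circ>\<^sub>w Qi) = n - 1"
            using Qil Ql t3 by (simp add: wcomp_def walk_len_def)
          show "\<forall>W'. dw_walk_from_to m n W' i j \<and> walk_len W' = n - 1 \<longrightarrow> W' = Q1j \<circ>\<^sub>w Qi"
          proof (intro allI impI)
            fix W' assume h: "dw_walk_from_to m n W' i j \<and> walk_len W' = n - 1"
            then have W'E: "edges_ok (dw_edge m n) W'" and W'h: "hd W' = i" and W'l: "last W' = j"
              and W'ne: "W' \<noteq> []" by (auto simp: wft_iff)
            have W'len: "length W' = n" using h W'ne n3 by (cases W') (auto simp: walk_len_def)
            have aW: "a < length W'" using W'len t3 by (simp add: a_def)
            have spW: "W' = take (Suc a) W' @ tl (drop a W')" by (rule split_walk[OF aW])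
            have e1: "edges_ok (dw_edge m n) (take (Suc a) W')" by (rule edges_ok_take[OF W'E])
            have h1: "hd (take (Suc a) W') = (k-1)*(n-1)+t" using W'h W'ne ik by simp
            have l1: "length (take (Suc a) W') = n - t + 2" using aW t3 by (simp add: a_def)
            have W1: "take (Suc a) W' = Qi" using seg_blade_end[OF n3 k t e1 h1 l1] Qix by simp
            have Wa: "W' ! a = 1"
            proof -
              have "last (take (Suc a) W') = W' ! a" by (rule last_take_Suc[OF aW])
              then show ?thesis using W1 Qix by simp
            qed
            have e2: "edges_ok (dw_edge m n) (drop a W')" by (rule edges_ok_drop[OF W'E])
            have h2: "hd (drop a W') = 1" using Wa aW by (simp add: hd_drop_conv_nth)
            have l2: "length (drop a W') = Suc (t-2)" using W'len t3 by (simp add: a_def)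
            obtain r' where r': "r' \<in> {1..m}" "drop a W' = 1 # [(r'-1)*(n-1)+2 ..< (r'-1)*(n-1)+2+(t-2)]"
              using seg_hub[OF n3 tt e2 h2 l2] by blast
            have "last (drop a W') = (r'-1)*(n-1)+(t-1)" using r' t3 last_hub[of "t-2" r' n] by simp
            moreover have "last (drop a W') = j" using aW W'l by simp
            ultimately have "r' = r" using rep_inj[of n r' r "t-1" "t-1"] jQ Qlast r r' n3 t1 by auto
            then have "drop a W' = Q1j" using r r' by simp
            then show "W' = Q1j \<circ>\<^sub>w Qi" using spW W1 by (simp add: wcomp_def)
          qed
          show "\<exists>s\<in>{1..m}. P = Q1j \<circ>\<^sub>w cyc n s \<circ>\<^sub>w Qi"
          proof
            show "s \<in> {1..m}" by (rule s(1))
            have "cR \<noteq> []" using cl by auto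
            then show "P = Q1j \<circ>\<^sub>w cyc n s \<circ>\<^sub>w Qi" using sp1 sp2 s(2) by (simp add: wcomp_def)
          qed
        qed
      qed
      have nA: "\<not> A" unfolding A_def using i1 by blast
      have nB: "\<not> B" unfolding B_def using j1 by blast
      show ?thesis using CC nA nB by blast
    qed
  qed
qed

end
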